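(* Let $K$ be a finite oriented simplicial complex and let $p,q$ be integers with $0\le p\le q$. Fix the bases of $C_m(K)$ given by the oriented $m$-simplices, and for integers $m\ge k\ge 0$ let $B_{m,k}=(b^{(m,k)}_{ij})$ be the matrix of $\partial_{m,k}\colon C_m(K)\to C_{m-k}(K)$ in these bases (rows indexed by $(m-k)$-simplices, columns by $m$-simplices). Then for every $q$-simplex $\sigma_j^{(q)}$, $$\deg_L^p(\sigma_j^{(q)})= -1+\sum_{q'=p}^{\dim K}\sum_k\min\Big(1,\sum_{i}|b_{ij}^{(q,h)}|\,|b^{(q',h')}_{ik}|\Big),$$ where $h=q-p$, $h'=q'-p$, $i$ runs over the $p$-simplices and $k$ over the $q'$-simplices of $K$.
   Context: $K$ is a finite abstract simplicial complex (finite family of nonempty finite vertex sets closed under nonempty subsets); a $q$-simplex has $q+1$ vertices; a face is a simplex of $K$ contained in a given simplex (a simplex is a face of itself); $\dim K$ is the maximal dimension of a simplex. Orientations: orderings of vertices modulo even permutations, $[v_{\eta(0)},\dots,v_{\eta(m)}]=\operatorname{sign}(\eta)[v_0,\dots,v_m]$; each simplex has a fixed orientation; $C_m(K)$ is the real vector space with basis the oriented $m$-simplices (opposite orientation = negative). Multi-parameter boundary operator: for $m\ge k\ge0$, $\partial_{m,k}\colon C_m(K)\to C_{m-k}(K)$ is linear with $\partial_{m,k}([v_{\eta(0)},\dots,v_{\eta(m)}])=\sum_{J}\operatorname{sign}(\eta)\operatorname{sign}(\epsilon_J)[v_0,\dots,\widehat{v_{j_1}},\dots,\widehat{v_{j_k}},\dots,v_m]$,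 summing over subsets $J=\{j_1<\dots<j_k\}\subseteq\{0,\dots,m\}$ (hatted vertices removed, others in increasing order), $\epsilon_J$ the permutation of $\{0,\dots,m\}$ with $r\mapsto j_{r+1}$ for $r<k$ and $k,\dots,m$ mapped increasingly onto the complement of $J$. In particular $\partial_{m,0}$ is the identity, and the entry $b^{(m,k)}_{ij}$ is $\pm1$ if the $i$-th $(m-k)$-simplex is a face of the $j$-th $m$-simplex and $0$ otherwise. $p$-lower adjacency: two simplices are $p$-lower adjacent if they have a common $p$-face. The $p$-lower degree $\deg_L^p(\sigma^{(q)})$ is the number of simplices of $K$ (of any dimension), other than $\sigma^{(q)}$ itself, that are $p$-lower adjacent to $\sigma^{(q)}$ (a simplex is not considered $p$-lower adjacent to itself). *)

theory Defs
  imports Complex_Main "HOL-Combinatorics.Permutations"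
begin

definition simplicial_complex :: "'a set set \<Rightarrow> bool" where
  "simplicial_complex K \<longleftrightarrow> finite K \<and>
     (\<forall>s\<in>K. s \<noteq> {} \<and> finite s) \<and>
     (\<forall>s\<in>K. \<forall>t. t \<noteq> {} \<and> t \<subseteq> s \<longrightarrow> t \<in> K)"

definition oriented :: "'a set set \<Rightarrow> ('a set \<Rightarrow> 'a list) \<Rightarrow> bool" where
  "oriented K ord \<longleftrightarrow> (\<forall>s\<in>K. distinct (ord s) \<and> set (ord s) = s)"

definition simplices :: "'a set set \<Rightarrow> nat \<Rightarrow> 'a set set" where
  "simplices K m = {s\<in>K. card s = m + 1}"

definition dimK :: "'a set set \<Rightarrow> nat" where
  "dimK K = Max ((\<lambda>s. card s - 1) ` K)"

definition list_perm :: "'a list \<Rightarrow> 'a list \<Rightarrow> nat \<Rightarrow> nat" where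
  "list_perm xs ys i = (if i < length ys then (THE j. j < length xs \<and> xs ! j = ys ! i) else i)"

text \<open>Sign of the reordering ys of the vertex list xs, i.e. [ys] = list_sign xs ys [xs].\<close>
definition list_sign :: "'a list \<Rightarrow> 'a list \<Rightarrow> real" where
  "list_sign xs ys = sign (list_perm xs ys)"

text \<open>For sigma = [v_0,...,v_m] (its fixed orientation) and J the removed vertices, the term is
  sign(eps_J) [remaining vertices in order]; since [v_{j_1},...,v_{j_k}, remaining] =
  sign(eps_J)[v_0..v_m] and the remaining list is a reordering of ord tau, the coefficient
  of the oriented simplex tau is the sign of the reordering
  (removed vertices in order) @ (ord tau) of ord sigma.\<close>
definition bnd :: "'a set set \<Rightarrow> ('a set \<Rightarrow> 'a list) \<Rightarrow> nat \<Rightarrow> nat \<Rightarrow> 'a set \<Rightarrow> 'a set \<Rightarrow> real" where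
  "bnd K ord m k \<tau> \<sigma> =
     (if \<sigma> \<in> simplices K m \<and> \<tau> \<in> simplices K (m - k) \<and> k \<le> m \<and> \<tau> \<subseteq> \<sigma>
      then list_sign (ord \<sigma>) (filter (\<lambda>v. v \<notin> \<tau>) (ord \<sigma>) @ ord \<tau>)
      else 0)"

definition lower_adj :: "'a set set \<Rightarrow> nat \<Rightarrow> 'a set \<Rightarrow> 'a set \<Rightarrow> bool" where
  "lower_adj K p s t \<longleftrightarrow> (\<exists>f\<in>simplices K p. f \<subseteq> s \<and> f \<subseteq> t)"

definition lower_degree :: "'a set set \<Rightarrow> nat \<Rightarrow> 'a set \<Rightarrow> nat" where
  "lower_degree K p s = card {t\<in>K. t \<noteq> s \<and> lower_adj K p s t}"

end

theory Submission
  imports Defs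
begin

lemma abs_list_sign: "\<bar>list_sign xs ys\<bar> = 1"
  unfolding list_sign_def sign_def by simp

lemma abs_bnd: "\<bar>bnd K ord m k \<tau> \<sigma>\<bar> =
  (if \<sigma> \<in> simplices K m \<and> \<tau> \<in> simplices K (m - k) \<and> k \<le> m \<and> \<tau> \<subseteq> \<sigma> then 1 else 0)"
  unfolding bnd_def by (simp add: abs_list_sign)

theorem theoremt:
  fixes K :: "'a set set" and ord :: "'a set \<Rightarrow> 'a list" and p q :: nat and \<sigma> :: "'a set"
  assumes "simplicial_complex K" and "oriented K ord" and "p \<le> q" and "\<sigma> \<in> simplices K q"
  shows "real (lower_degree K p \<sigma>) =
    -1 + (\<Sum>q'\<in>{p..dimK K}. \<Sum>\<tau>\<in>simplices K q'.
           min 1 (\<Sum>i\<in>simplices K p. \<bar>bnd K ord q (q - p) i \<sigma>\<bar> * \<bar>bnd K ord q' (q' - p) i \<tau>\<bar>))"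
proof -
  have finK: "finite K" using assms(1) unfolding simplicial_complex_def by blast
  have fins: "\<And>s. s \<in> K \<Longrightarrow> finite s" using assms(1) unfolding simplicial_complex_def by blast
  have sK: "\<sigma> \<in> K" and cs: "card \<sigma> = q + 1" using assms(4) unfolding simplices_def by auto
  have finS: "\<And>m. finite (simplices K m)" using finK unfolding simplices_def by auto
  define A where "A = {t\<in>K. lower_adj K p \<sigma> t}"
  have inner: "min 1 (\<Sum>i\<in>simplices K p. \<bar>bnd K ord q (q - p) i \<sigma>\<bar> * \<bar>bnd K ord q' (q' - p) i \<tau>\<bar>)
     = (if \<tau> \<in> A then 1 else 0)" if "q' \<ge> p" "\<tau> \<in> simplices K q'" for q' \<tau>
  proof -
    have "(\<Sum>i\<in>simplices K p. \<bar>bnd K ord q (q - p) i \<sigma>\<bar> * \<bar>bnd K ord q' (q' - p) i \<tau>\<bar>)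
        = (\<Sum>i\<in>simplices K p. if i \<subseteq> \<sigma> \<and> i \<subseteq> \<tau> then 1 else 0)"
      by (rule sum.cong) (use that assms(3,4) in \<open>auto simp: abs_bnd\<close>)
    also have "\<dots> = real (card {i\<in>simplices K p. i \<subseteq> \<sigma> \<and> i \<subseteq> \<tau>})"
      by (simp add: sum.If_cases finS) (rule arg_cong[where f=card], blast)
    finally have e: "(\<Sum>i\<in>simplices K p. \<bar>bnd K ord q (q - p) i \<sigma>\<bar> * \<bar>bnd K ord q' (q' - p) i \<tau>\<bar>)
        = real (card {i\<in>simplices K p. i \<subseteq> \<sigma> \<and> i \<subseteq> \<tau>})" .
    have tK: "\<tau> \<in> K" using that unfolding simplices_def by auto
    show ?thesis
    proof (cases "\<tau> \<in> A")
      case True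
      then have "{i\<in>simplices K p. i \<subseteq> \<sigma> \<and> i \<subseteq> \<tau>} \<noteq> {}"
        unfolding A_def lower_adj_def by auto
      then have "card {i\<in>simplices K p. i \<subseteq> \<sigma> \<and> i \<subseteq> \<tau>} \<ge> 1"
        using finS[of p] by (simp add: Suc_le_eq card_gt_0_iff)
      then show ?thesis using True e by simp
    next
      case False
      then have "{i\<in>simplices K p. i \<subseteq> \<sigma> \<and> i \<subseteq> \<tau>} = {}"
        unfolding A_def lower_adj_def using tK by auto
      then have "card {i\<in>simplices K p. i \<subseteq> \<sigma> \<and> i \<subseteq> \<tau>} = 0" by (simp only: card.empty)
      then show ?thesis using False e by simp
    qed
  qed
  have "(\<Sum>q'\<in>{p..dimK K}. \<Sum>\<tau>\<in>simplices K q'.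
           min 1 (\<Sum>i\<in>simplices K p. \<bar>bnd K ord q (q - p) i \<sigma>\<bar> * \<bar>bnd K ord q' (q' - p) i \<tau>\<bar>))
      = (\<Sum>q'\<in>{p..dimK K}. \<Sum>\<tau>\<in>simplices K q'. (if \<tau> \<in> A then 1 else 0))"
    by (rule sum.cong[OF refl], rule sum.cong[OF refl]) (simp add: inner)
  also have "\<dots> = (\<Sum>\<tau>\<in>(\<Union>q'\<in>{p..dimK K}. simplices K q'). (if \<tau> \<in> A then 1 else 0))"
    by (rule sum.UNION_disjoint[symmetric]) (auto simp: finS finK simplices_def)
  also have "\<dots> = real (card ((\<Union>q'\<in>{p..dimK K}. simplices K q') \<inter> A))"
    by (simp add: sum.If_cases finS)
  also have "(\<Union>q'\<in>{p..dimK K}. simplices K q') \<inter> A = A"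
  proof -
    have "t \<in> (\<Union>q'\<in>{p..dimK K}. simplices K q')" if "t \<in> A" for t
    proof -
      from that obtain f where f: "f \<in> simplices K p" "f \<subseteq> t" "t \<in> K"
        unfolding A_def lower_adj_def by auto
      have "card f \<le> card t" using f fins card_mono by blast
      then have c: "card t \<ge> p + 1" using f unfolding simplices_def by auto
      have "card t - 1 \<le> dimK K" unfolding dimK_def using f(3) finK by auto
      then show ?thesis using c f(3) unfolding simplices_def
        by (intro UN_I[of "card t - 1"]) auto
    qed
    then show ?thesis by blast
  qed
  finally have S: "(\<Sum>q'\<in>{p..dimK K}. \<Sum>\<tau>\<in>simplices K q'.
           min 1 (\<Sum>i\<in>simplices K p. \<bar>bnd K ord q (q - p) i \<sigma>\<bar> * \<bar>bnd K ord q' (q' - p) i \<tau>\<bar>))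
      = real (card A)" .
  have "\<sigma> \<in> A"
  proof -
    have "p + 1 \<le> card \<sigma>" using cs assms(3) by simp
    then obtain f where f: "f \<subseteq> \<sigma>" "card f = p + 1" "finite f"
      using obtain_subset_with_card_n by blast
    have "f \<noteq> {}" using f by auto
    then have "f \<in> K" using assms(1) sK f(1) unfolding simplicial_complex_def by blast
    then have "f \<in> simplices K p" using f unfolding simplices_def by auto
    then show ?thesis unfolding A_def lower_adj_def using sK f by auto
  qed
  moreover have "A = insert \<sigma> {t\<in>K. t \<noteq> \<sigma> \<and> lower_adj K p \<sigma> t}"
    using calculation unfolding A_def by auto
  ultimately have "card A = Suc (lower_degree K p \<sigma>)"
    unfolding lower_degree_def using finK by simp
  then show ?thesis using S by simp
qed

end
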